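(* In the replace-after-fixed-time process with parameters $\lambda>0$, $r>0$, for every $t>0$ the random variable $D(t)$ has the Poisson distribution with mean $\lambda t$, i.e. $\Pr(D(t)=l)=e^{-\lambda t}(\lambda t)^l/l!$ for $l=0,1,2,\ldots$.
   Context: Let $X_1,X_2,\ldots$ be independent random variables, each exponentially distributed with rate $\lambda>0$ (density $\lambda e^{-\lambda x}$ for $x>0$). Fix $r>0$ and set $Y_k=\min(X_k,r)$. For $t\ge 0$ let $N(t)=\max\{n\ge 0:\sum_{k=1}^n Y_k\le t\}$ (the replace-after-fixed-time, or RaFT, process). Write $N(t)=A(t)+D(t)$, where $A(t)=\#\{k\le N(t): X_k>r\}$ (components replaced while still functioning) and $D(t)=\#\{k\le N(t): X_k\le r\}$ (components replaced because they failed). *)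

theory Defs
  imports "HOL-Probability.Probability"
begin

text \<open>RaFT process driven by a sample path x 1, x 2, ... of lifetimes (index 0 unused).\<close>

definition raft_Y :: "(nat \<Rightarrow> real) \<Rightarrow> real \<Rightarrow> nat \<Rightarrow> real" where
  "raft_Y x r k = min (x k) r"

definition raft_N :: "(nat \<Rightarrow> real) \<Rightarrow> real \<Rightarrow> real \<Rightarrow> nat" where
  "raft_N x r t = (GREATEST n. (\<Sum>k=1..n. raft_Y x r k) \<le> t)"

definition raft_A :: "(nat \<Rightarrow> real) \<Rightarrow> real \<Rightarrow> real \<Rightarrow> nat" where
  "raft_A x r t = card {k \<in> {1..raft_N x r t}. x k > r}"

definition raft_D :: "(nat \<Rightarrow> real) \<Rightarrow> real \<Rightarrow> real \<Rightarrow> nat" where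
  "raft_D x r t = card {k \<in> {1..raft_N x r t}. x k \<le> r}"

end

theory Submission
  imports Defs
begin


definition Ysum :: "(nat \<Rightarrow> real) \<Rightarrow> real \<Rightarrow> nat \<Rightarrow> real" where
  "Ysum x r n = (\<Sum>k=1..n. raft_Y x r k)"
definition nonneg :: "(nat \<Rightarrow> real) \<Rightarrow> bool" where
  "nonneg x = (\<forall>k\<ge>1. 0 \<le> x k)"
definition good :: "(nat \<Rightarrow> real) \<Rightarrow> real \<Rightarrow> real \<Rightarrow> bool" where
  "good x r t = (nonneg x \<and> (\<exists>n. t < Ysum x r n))"

lemma sum_shift1: "(\<Sum>k=1..Suc n. f k) = f 1 + (\<Sum>k=1..n. f (Suc k)) " for f :: "nat \<Rightarrow> 'a::comm_monoid_add"
  by (induction n) (auto simp: add.assoc)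

lemma Ysum_0[simp]: "Ysum x r 0 = 0" by (simp add: Ysum_def)

lemma Ysum_Suc: "Ysum x r (Suc n) = min (x 1) r + Ysum (\<lambda>k. x (Suc k)) r n"
  unfolding Ysum_def raft_Y_def by (subst sum_shift1) simp

lemma Ysum_Suc2: "Ysum x r (Suc n) = Ysum x r n + min (x (Suc n)) r"
  unfolding Ysum_def raft_Y_def by simp

lemma Ysum_mono: assumes "nonneg x" "0 \<le> r" "m \<le> n" shows "Ysum x r m \<le> Ysum x r n"
  using assms(3)
proof (induction n)
  case 0 then show ?case by simp
next
  case (Suc n)
  show ?case
  proof (cases "m = Suc n")
    case False
    then have "Ysum x r m \<le> Ysum x r n" using Suc by simp
    moreover have "0 \<le> min (x (Suc n)) r" using assms(1,2) by (simp add: nonneg_def)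
    ultimately show ?thesis by (simp add: Ysum_Suc2 min_def)
  qed simp
qed

lemma raft_N_eq:
  assumes "nonneg x" "0 \<le> r" "Ysum x r n \<le> t" "t < Ysum x r (Suc n)"
  shows "raft_N x r t = n"
  unfolding raft_N_def
proof (rule Greatest_equality)
  show "(\<Sum>k = 1..n. raft_Y x r k) \<le> t" using assms(3) by (simp add: Ysum_def)
  fix m assume "(\<Sum>k = 1..m. raft_Y x r k) \<le> t"
  then have "Ysum x r m \<le> t" by (simp add: Ysum_def)
  show "m \<le> n"
  proof (rule ccontr)
    assume "\<not> m \<le> n"
    then have "Ysum x r (Suc n) \<le> Ysum x r m" by (intro Ysum_mono assms) auto
    with \<open>Ysum x r m \<le> t\<close> assms(4) show False by simp
  qed
qed

lemma exists_N:
  assumes "0 \<le> t" "t < Ysum x r n"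
  shows "\<exists>n. Ysum x r n \<le> t \<and> t < Ysum x r (Suc n)"
proof -
  define k where "k = (LEAST n. t < Ysum x r n)"
  have k: "t < Ysum x r k" unfolding k_def by (rule LeastI) (rule assms(2))
  have "k \<noteq> 0" using k assms(1) by (cases k) auto
  then obtain j where j: "k = Suc j" by (cases k) auto
  have "j < (LEAST n. t < Ysum x r n)" using j unfolding k_def by simp
  then have "\<not> t < Ysum x r j" by (rule not_less_Least)
  then show ?thesis using k j by (intro exI[of _ j]) auto
qed

lemma card_filter_sum: "finite A \<Longrightarrow> card {k\<in>A. P k} = (\<Sum>k\<in>A. if P k then 1 else 0::nat)"
proof -
  assume f: "finite A"
  have "card {k\<in>A. P k} = sum (\<lambda>_. 1::nat) {k\<in>A. P k}" by (rule card_eq_sum)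
  also have "\<dots> = (\<Sum>k\<in>A. if P k then 1 else 0::nat)" by (rule sum.inter_filter[OF f])
  finally show ?thesis .
qed

lemma card_filter_Suc:
  "card {k\<in>{1..Suc n}. P k} = (if P 1 then 1 else 0) + card {k\<in>{1..n}. P (Suc k)}"
proof -
  have "card {k\<in>{1..Suc n}. P k} = (\<Sum>k=1..Suc n. if P k then 1 else 0::nat)"
    by (rule card_filter_sum) simp
  also have "\<dots> = (if P 1 then 1 else 0) + (\<Sum>k=1..n. if P (Suc k) then 1 else 0::nat)"
    by (rule sum_shift1)
  also have "(\<Sum>k=1..n. if P (Suc k) then 1 else 0::nat) = card {k\<in>{1..n}. P (Suc k)}"
    by (rule card_filter_sum[symmetric]) simp
  finally show ?thesis .
qed

lemma raft_cong:
  assumes "\<And>k. 1 \<le> k \<Longrightarrow> x k = x' k"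
  shows "raft_D x r t = raft_D x' r t" "good x r t = good x' r t" "nonneg x = nonneg x'"
proof -
  have Y: "Ysum x r n = Ysum x' r n" for n
    unfolding Ysum_def raft_Y_def using assms by (intro sum.cong) auto
  have N: "raft_N x r t = raft_N x' r t"
    using Y unfolding raft_N_def Ysum_def by simp
  show "raft_D x r t = raft_D x' r t"
    unfolding raft_D_def N using assms by (intro arg_cong[where f=card]) auto
  show nn: "nonneg x = nonneg x'" using assms by (auto simp: nonneg_def)
  show "good x r t = good x' r t" using Y nn by (simp add: good_def)
qed

lemma det_big:
  assumes "nonneg x" "0 < r" "0 \<le> t" "t < min (x 1) r"
  shows "raft_D x r t = 0" "good x r t = nonneg x"
proof -
  have "raft_N x r t = 0"
    using assms by (intro raft_N_eq) (auto simp: Ysum_Suc)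
  then show "raft_D x r t = 0" by (simp add: raft_D_def)
  show "good x r t = nonneg x" using assms unfolding good_def
    by (auto intro!: exI[of _ 1] simp: Ysum_Suc)
qed

lemma det_small:
  assumes "nonneg x" "0 < r" "min (x 1) r \<le> t"
  shows "good x r t = good (\<lambda>k. x (Suc k)) r (t - min (x 1) r)"
    and "good (\<lambda>k. x (Suc k)) r (t - min (x 1) r) \<Longrightarrow>
         raft_D x r t = (if x 1 \<le> r then 1 else 0) + raft_D (\<lambda>k. x (Suc k)) r (t - min (x 1) r)"
proof -
  let ?x = "\<lambda>k. x (Suc k)" and ?y = "min (x 1) r"
  have nn: "nonneg ?x" using assms(1) by (auto simp: nonneg_def)
  have ex: "(\<exists>n. t < Ysum x r n) = (\<exists>n. t - ?y < Ysum ?x r n)"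
  proof
    assume "\<exists>n. t < Ysum x r n"
    then obtain n where "t < Ysum x r n" by blast
    moreover have "0 \<le> t" using assms by (auto simp: nonneg_def)
    ultimately have "n \<noteq> 0" by (cases n) auto
    then obtain j where "n = Suc j" by (cases n) auto
    with \<open>t < Ysum x r n\<close> show "\<exists>n. t - ?y < Ysum ?x r n" by (intro exI[of _ j]) (auto simp: Ysum_Suc)
  next
    assume "\<exists>n. t - ?y < Ysum ?x r n"
    then obtain n where "t - ?y < Ysum ?x r n" by blast
    then show "\<exists>n. t < Ysum x r n" by (intro exI[of _ "Suc n"]) (auto simp: Ysum_Suc)
  qed
  show "good x r t = good ?x r (t - ?y)"
    using ex nn assms(1) by (simp add: good_def)
  assume g: "good ?x r (t - ?y)"
  then obtain n where n: "Ysum ?x r n \<le> t - ?y" "t - ?y < Ysum ?x r (Suc n)"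
    using exists_N[of "t - ?y" ?x r] assms by (auto simp: good_def)
  have N1: "raft_N ?x r (t - ?y) = n" using n nn assms by (intro raft_N_eq) auto
  have N2: "raft_N x r t = Suc n" using n assms by (intro raft_N_eq) (auto simp: Ysum_Suc[of x r])
  show "raft_D x r t = (if x 1 \<le> r then 1 else 0) + raft_D ?x r (t - ?y)"
    unfolding raft_D_def N1 N2 by (rule card_filter_Suc)
qed




definition poi :: "real \<Rightarrow> nat \<Rightarrow> real \<Rightarrow> real" where
  "poi lam l t = exp (- lam * t) * (lam * t) ^ l / fact l"

definition Jint :: "real \<Rightarrow> nat \<Rightarrow> real \<Rightarrow> real \<Rightarrow> real" where
  "Jint lam l t m = (if l = 0 then 0 else exp (- lam * t) * lam ^ l * (t ^ l - (t - m) ^ l) / fact l)"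

lemma poi_identity:
  "poi lam l (t - m) * exp (- lam * m) + Jint lam l t m = poi lam l t"
proof -
  have e: "exp (- lam * (t - m)) * exp (- lam * m) = exp (- lam * t)"
    by (simp add: exp_add[symmetric] algebra_simps)
  have p: "poi lam l (t - m) * exp (- lam * m) = exp (- lam * t) * lam ^ l * (t - m) ^ l / fact l"
  proof -
    have "poi lam l (t - m) * exp (- lam * m) = (exp (- lam * (t - m)) * exp (- lam * m)) * lam ^ l * (t - m) ^ l / fact l"
      unfolding poi_def power_mult_distrib by simp
    then show ?thesis unfolding e .
  qed
  show ?thesis
    unfolding p unfolding poi_def Jint_def power_mult_distrib
    by (simp add: diff_divide_distrib right_diff_distrib)
qed

lemma poi_0: "poi lam l 0 = (if l = 0 then 1 else 0)"
  by (simp add: poi_def)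

lemma poi_nonneg: "0 \<le> lam \<Longrightarrow> 0 \<le> t \<Longrightarrow> 0 \<le> poi lam l t"
  by (simp add: poi_def)

lemma exp_tail:
  assumes "0 < lam" "0 \<le> m"
  shows "(\<integral>\<^sup>+a. ennreal (exponential_density lam a) * indicator {m..} a \<partial>lborel) = ennreal (exp (- lam * m))"
proof -
  have "(\<integral>\<^sup>+a. ennreal (exponential_density lam a) * indicator {m..} a \<partial>lborel)
      = (\<integral>\<^sup>+a. ennreal (lam * exp (- a * lam)) * indicator {m..} a \<partial>lborel)"
    using assms by (intro nn_integral_cong) (auto simp: exponential_density_def split: split_indicator)
  also have "\<dots> = ennreal (0 - (- exp (- m * lam)))"
  proof (rule nn_integral_FTC_atLeast)
    show "(\<lambda>a. lam * exp (- a * lam)) \<in> borel_measurable borel" by measurable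
    fix x :: real
    show "DERIV (\<lambda>a. - exp (- a * lam)) x :> lam * exp (- x * lam)"
      by (auto intro!: derivative_eq_intros)
    show "0 \<le> lam * exp (- x * lam)" using assms by simp
  next
    have "filterlim (\<lambda>a::real. a * lam) at_top at_top"
      using assms by (intro filterlim_at_top_mult_tendsto_pos[OF tendsto_const] filterlim_ident) auto
    then have "filterlim (\<lambda>a::real. - (a * lam)) at_bot at_top"
      by (simp add: filterlim_uminus_at_bot)
    then have "((\<lambda>a. exp (- (a * lam))) \<longlongrightarrow> 0) at_top"
      by (rule filterlim_compose[OF exp_at_bot])
    then show "((\<lambda>a. - exp (- a * lam)) \<longlongrightarrow> 0) at_top" by (auto dest: tendsto_minus)
  qed
  finally show ?thesis by (simp add: mult.commute)
qed

lemma Jint_FTC: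
  assumes "0 < lam" "0 \<le> m" "m \<le> t" "l \<noteq> 0"
  shows "(\<integral>\<^sup>+a. ennreal (exponential_density lam a * poi lam (l - 1) (t - a)) * indicator {0..m} a \<partial>lborel)
     = ennreal (Jint lam l t m)"
proof -
  define F where "F a = - exp (- lam * t) * lam ^ l * (t - a) ^ l / fact l" for a
  have "(\<integral>\<^sup>+a. ennreal (exponential_density lam a * poi lam (l - 1) (t - a)) * indicator {0..m} a \<partial>lborel)
     = ennreal (F m - F 0)"
  proof (rule nn_integral_FTC_Icc)
    show "(\<lambda>a. exponential_density lam a * poi lam (l - 1) (t - a)) \<in> borel_measurable borel"
      unfolding poi_def exponential_density_def by measurable
    fix x assume x: "x \<in> {0..m}"
    show "0 \<le> exponential_density lam x * poi lam (l - 1) (t - x)"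
      using assms x by (auto simp: exponential_density_def intro!: mult_nonneg_nonneg poi_nonneg)
    have "DERIV F x :> exp (- lam * t) * lam ^ l * (of_nat l * (t - x) ^ (l - 1)) / fact l"
      unfolding F_def by (auto intro!: derivative_eq_intros)
    moreover have "exp (- lam * t) * lam ^ l * (of_nat l * (t - x) ^ (l - 1)) / fact l
        = exponential_density lam x * poi lam (l - 1) (t - x)"
    proof -
      obtain k where k: "l = Suc k" using assms(4) by (cases l) auto
      have e: "exp (- x * lam) * exp (- lam * (t - x)) = exp (- lam * t)"
        by (simp add: exp_add[symmetric] algebra_simps)
      have r: "exponential_density lam x * poi lam (l - 1) (t - x)
          = lam * lam ^ k * (t - x) ^ k * exp (- lam * t) / fact k"
        using x e unfolding k exponential_density_def poi_def power_mult_distrib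
        by (simp add: field_simps)
      have f: "fact (Suc k) = (of_nat (Suc k) :: real) * fact k" by simp
      show ?thesis unfolding r unfolding k f
        by (simp add: field_simps del: of_nat_Suc)
    qed
    ultimately show "DERIV F x :> exponential_density lam x * poi lam (l - 1) (t - x)" by simp
  qed (use assms in auto)
  also have "F m - F 0 = Jint lam l t m"
    using assms unfolding F_def Jint_def by (simp add: field_simps)
  finally show ?thesis .
qed

lemma integral_step:
  fixes h :: "real \<Rightarrow> ennreal"
  assumes "0 < lam" "0 \<le> m" "m \<le> t"
    and h1: "\<And>a. 0 \<le> a \<Longrightarrow> a < m \<Longrightarrow> h a = (if l = 0 then 0 else ennreal (poi lam (l - 1) (t - a)))"
    and h2: "\<And>a. m < a \<Longrightarrow> h a = c"
  shows "(\<integral>\<^sup>+a. ennreal (exponential_density lam a) * h a \<partial>lborel)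
     = c * ennreal (exp (- lam * m)) + ennreal (Jint lam l t m)"
proof -
  let ?g = "\<lambda>a. (if l = 0 then 0 else exponential_density lam a * poi lam (l - 1) (t - a))"
  have ae: "AE a in lborel. ennreal (exponential_density lam a) * h a
      = ennreal (?g a) * indicator {0..m} a + c * (ennreal (exponential_density lam a) * indicator {m..} a)"
    using AE_lborel_singleton[of m]
  proof (eventually_elim)
    case (elim a)
    show ?case
    proof (cases "a < 0")
      case True then show ?thesis using assms by (simp add: exponential_density_def indicator_def)
    next
      case False
      show ?thesis
      proof (cases "a < m")
        case True
        have "0 \<le> exponential_density lam a" using assms by (simp add: exponential_density_def)
        then show ?thesis using True False h1[of a] by (simp add: indicator_def ennreal_mult')
      next
        case False': False
        then have "m < a" using elim by simp
        then show ?thesis using h2[of a] assms by (simp add: indicator_def mult.commute)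
      qed
    qed
  qed
  have "(\<integral>\<^sup>+a. ennreal (exponential_density lam a) * h a \<partial>lborel)
    = (\<integral>\<^sup>+a. ennreal (?g a) * indicator {0..m} a + c * (ennreal (exponential_density lam a) * indicator {m..} a) \<partial>lborel)"
    by (rule nn_integral_cong_AE[OF ae])
  also have "\<dots> = (\<integral>\<^sup>+a. ennreal (?g a) * indicator {0..m} a \<partial>lborel) + c * (\<integral>\<^sup>+a. ennreal (exponential_density lam a) * indicator {m..} a \<partial>lborel)"
    unfolding poi_def exponential_density_def
    by (subst nn_integral_add) (auto intro!: nn_integral_cmult)
  also have "(\<integral>\<^sup>+a. ennreal (exponential_density lam a) * indicator {m..} a \<partial>lborel) = ennreal (exp (- lam * m))"
    by (rule exp_tail[OF assms(1,2)])
  also have "(\<integral>\<^sup>+a. ennreal (?g a) * indicator {0..m} a \<partial>lborel) = ennreal (Jint lam l t m)"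
  proof (cases "l = 0")
    case True then show ?thesis by (simp add: Jint_def)
  next
    case False then show ?thesis using Jint_FTC[OF assms(1-3) False] by simp
  qed
  finally show ?thesis by (simp add: add.commute)
qed




definition sx :: "real stream \<Rightarrow> nat \<Rightarrow> real" where
  "sx s = (\<lambda>k. s !! (k - 1))"

lemma nonneg_sx: "nonneg (sx s) \<longleftrightarrow> (\<forall>j. 0 \<le> s !! j)"
proof
  assume h: "nonneg (sx s)"
  show "\<forall>j. 0 \<le> s !! j"
  proof
    fix j show "0 \<le> s !! j" using h unfolding nonneg_def sx_def by (drule_tac x="Suc j" in spec) simp
  qed
next
  assume "\<forall>j. 0 \<le> s !! j"
  then show "nonneg (sx s)" unfolding nonneg_def sx_def by simp
qed

lemma nonneg_sx_Cons: "nonneg (sx (a ## s)) \<longleftrightarrow> 0 \<le> a \<and> nonneg (sx s)"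
proof -
  have "(\<forall>j. 0 \<le> (a ## s) !! j) \<longleftrightarrow> 0 \<le> a \<and> (\<forall>j. 0 \<le> s !! j)"
  proof safe
    assume h: "\<forall>j. 0 \<le> (a ## s) !! j"
    show "0 \<le> a" using h[rule_format, of 0] by simp
    fix j show "0 \<le> s !! j" using h[rule_format, of "Suc j"] by simp
  next
    fix j assume "0 \<le> a" "\<forall>j. 0 \<le> s !! j"
    then show "0 \<le> (a ## s) !! j" by (cases j) auto
  qed
  then show ?thesis unfolding nonneg_sx .
qed

lemma sx_Cons_1[simp]: "sx (a ## s) 1 = a" by (simp add: sx_def)
lemma sx_Cons_1'[simp]: "sx (a ## s) (Suc 0) = a" by (simp add: sx_def)

lemma sx_Cons_Suc: "1 \<le> k \<Longrightarrow> sx (a ## s) (Suc k) = sx s k"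
  by (cases k) (auto simp: sx_def)

lemma sec_small:
  assumes "0 \<le> a" "0 < r" "a < t" "a < r"
  shows "(good (sx (a ## s)) r t \<and> raft_D (sx (a ## s)) r t = l) \<longleftrightarrow>
         (l \<noteq> 0 \<and> good (sx s) r (t - a) \<and> raft_D (sx s) r (t - a) = l - 1)"
proof -
  let ?x = "sx (a ## s)"
  have c: "raft_D (\<lambda>k. ?x (Suc k)) r t' = raft_D (sx s) r t'"
     "good (\<lambda>k. ?x (Suc k)) r t' = good (sx s) r t'" for t'
    by (rule raft_cong; simp add: sx_Cons_Suc)+
  have m: "min (?x 1) r = a" using assms by (simp add: sx_Cons_1)
  show ?thesis
  proof (cases "nonneg (sx s)")
    case False
    then show ?thesis by (simp add: good_def nonneg_sx_Cons)
  next
    case True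
    then have nn: "nonneg ?x" using assms by (simp add: nonneg_sx_Cons)
    note ds = det_small[OF nn assms(2), unfolded m c]
    have "good ?x r t = good (sx s) r (t - a)" using ds(1) assms by simp
    moreover have "good (sx s) r (t - a) \<Longrightarrow> raft_D ?x r t = 1 + raft_D (sx s) r (t - a)"
      using ds(2) assms by (simp add: sx_Cons_1)
    ultimately show ?thesis by auto
  qed
qed

lemma sec_big1:
  assumes "0 \<le> a" "0 < r" "0 \<le> t" "t < r" "t < a"
  shows "(good (sx (a ## s)) r t \<and> raft_D (sx (a ## s)) r t = l) \<longleftrightarrow>
         (nonneg (sx s) \<and> l = 0)"
proof (cases "nonneg (sx s)")
  case False
  then show ?thesis by (simp add: good_def nonneg_sx_Cons)
next
  case True
  then have nn: "nonneg (sx (a ## s))" using assms by (simp add: nonneg_sx_Cons)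
  have "t < min (sx (a ## s) 1) r" using assms by (simp add: sx_Cons_1)
  note db = det_big[OF nn assms(2,3) this]
  show ?thesis using db True nn by auto
qed

lemma sec_big2:
  assumes "0 \<le> a" "0 < r" "r \<le> t" "r < a"
  shows "(good (sx (a ## s)) r t \<and> raft_D (sx (a ## s)) r t = l) \<longleftrightarrow>
         (good (sx s) r (t - r) \<and> raft_D (sx s) r (t - r) = l)"
proof -
  let ?x = "sx (a ## s)"
  have c: "raft_D (\<lambda>k. ?x (Suc k)) r t' = raft_D (sx s) r t'"
     "good (\<lambda>k. ?x (Suc k)) r t' = good (sx s) r t'" for t'
    by (rule raft_cong; simp add: sx_Cons_Suc)+
  have m: "min (?x 1) r = r" using assms by (simp add: sx_Cons_1)
  show ?thesis
  proof (cases "nonneg (sx s)")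
    case False
    then show ?thesis by (simp add: good_def nonneg_sx_Cons)
  next
    case True
    then have nn: "nonneg ?x" using assms by (simp add: nonneg_sx_Cons)
    note ds = det_small[OF nn assms(2), unfolded m c]
    have "good ?x r t = good (sx s) r (t - r)" using ds(1) assms by simp
    moreover have "good (sx s) r (t - r) \<Longrightarrow> raft_D ?x r t = raft_D (sx s) r (t - r)"
      using ds(2) assms by (simp add: sx_Cons_1)
    ultimately show ?thesis by auto
  qed
qed

lemma Greatest_char:
  "((GREATEST n::nat. P n) = k) \<longleftrightarrow>
    ((P k \<and> (\<forall>m. P m \<longrightarrow> m \<le> k)) \<or> (\<not> (\<exists>j. P j \<and> (\<forall>m. P m \<longrightarrow> m \<le> j)) \<and> k = (GREATEST n::nat. False)))"
proof (cases "\<exists>j. P j \<and> (\<forall>m. P m \<longrightarrow> m \<le> j)")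
  case True
  then obtain j where j: "P j" "\<forall>m. P m \<longrightarrow> m \<le> j" by blast
  then have "(GREATEST n. P n) = j" by (intro Greatest_equality) auto
  then show ?thesis using j True by (auto intro: antisym)
next
  case False
  have "(\<lambda>x. P x \<and> (\<forall>y. P y \<longrightarrow> y \<le> x)) = (\<lambda>x. False \<and> (\<forall>y. False \<longrightarrow> y \<le> x))"
    by (rule ext) (use False in blast)
  then have "(GREATEST n. P n) = (GREATEST n::nat. False)"
    unfolding Greatest_def by simp
  then show ?thesis using False by auto
qed

lemma meas_raft:
  assumes [measurable]: "\<And>k. (\<lambda>\<omega>. x \<omega> k) \<in> borel_measurable N"
  shows "Measurable.pred N (\<lambda>\<omega>. raft_D (x \<omega>) r t = l)"
    and "Measurable.pred N (\<lambda>\<omega>. good (x \<omega>) r t)"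
proof -
  have Y[measurable]: "(\<lambda>\<omega>. Ysum (x \<omega>) r n) \<in> borel_measurable N" for n
    unfolding Ysum_def raft_Y_def by measurable
  have NN: "Measurable.pred N (\<lambda>\<omega>. raft_N (x \<omega>) r t = n)" for n
    unfolding raft_N_def Greatest_char Ysum_def[symmetric] by measurable
  have D: "(raft_D (x \<omega>) r t = l) \<longleftrightarrow>
     (\<exists>n. raft_N (x \<omega>) r t = n \<and> (\<Sum>k\<in>{1..n}. if x \<omega> k \<le> r then 1 else 0 :: real) = real l)" for \<omega>
  proof -
    have "real (card {k\<in>{1..n}. x \<omega> k \<le> r}) = (\<Sum>k\<in>{1..n}. if x \<omega> k \<le> r then 1 else 0 :: real)" for n
      by (subst card_filter_sum) (auto simp: of_nat_sum intro!: sum.cong)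
    then show ?thesis unfolding raft_D_def
      by (metis of_nat_eq_iff)
  qed
  show "Measurable.pred N (\<lambda>\<omega>. raft_D (x \<omega>) r t = l)"
    unfolding D using NN by measurable
  show "Measurable.pred N (\<lambda>\<omega>. good (x \<omega>) r t)"
    unfolding good_def nonneg_def by measurable
qed




context
  fixes lam r :: real
  assumes lam: "0 < lam" and r: "0 < r"
begin

abbreviation "EE \<equiv> density lborel (\<lambda>x. ennreal (exponential_density lam x))"
abbreviation "SS \<equiv> stream_space EE"

definition Aset :: "nat \<Rightarrow> real \<Rightarrow> real stream set" where
  "Aset l t = {s \<in> space SS. good (sx s) r t \<and> raft_D (sx s) r t = l}"

lemma EE_prob: "prob_space EE"
  using prob_space_exponential_density[OF lam] .

lemma space_SS: "space SS = UNIV"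
  by (simp add: space_stream_space)

lemma sx_meas[measurable]: "(\<lambda>s. sx s k) \<in> borel_measurable SS"
proof -
  have "(\<lambda>s. s !! (k - 1)) \<in> measurable SS EE" by measurable
  moreover have "measurable SS EE = measurable SS borel" by (rule measurable_cong_sets) auto
  ultimately show ?thesis unfolding sx_def by simp
qed

lemma Aset_sets[measurable]: "Aset l t \<in> sets SS"
proof -
  have [measurable]: "Measurable.pred SS (\<lambda>s. raft_D (sx s) r t = l)"
    "Measurable.pred SS (\<lambda>s. good (sx s) r t)"
    by (rule meas_raft[of sx], simp)+
  show ?thesis unfolding Aset_def by measurable
qed

lemma nonneg_one: "emeasure SS {s \<in> space SS. nonneg (sx s)} = 1"
proof -
  interpret E: prob_space EE by (rule EE_prob)
  interpret S: prob_space SS by (rule E.prob_space_stream_space)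
  have "AE a in EE. 0 \<le> a"
    by (subst AE_density) (auto simp: exponential_density_def)
  then have "AE s in SS. stream_all (\<lambda>a. 0 \<le> a) s"
    by (intro E.AE_stream_all) auto
  then have ae: "AE s in SS. s \<in> {s \<in> space SS. nonneg (sx s)}"
    by eventually_elim (auto simp: stream_all_def nonneg_sx space_SS)
  have [measurable]: "Measurable.pred SS (\<lambda>s. nonneg (sx s))"
    unfolding nonneg_def by measurable
  show ?thesis
    by (rule S.emeasure_eq_1_AE[OF _ ae]) measurable
qed

end




context
  fixes lam r :: real
  assumes lam: "0 < lam" and r: "0 < r"
begin

abbreviation "EEx \<equiv> density lborel (\<lambda>x. ennreal (exponential_density lam x))"
abbreviation "SSx \<equiv> stream_space EEx"
abbreviation "AS \<equiv> Aset lam r"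

lemma Jint_nonneg: "0 \<le> m \<Longrightarrow> m \<le> t \<Longrightarrow> 0 \<le> Jint lam l t m"
  unfolding Jint_def using lam by (auto intro!: divide_nonneg_pos mult_nonneg_nonneg power_mono)

lemma step:
  assumes t: "0 \<le> t"
    and IHl: "l \<noteq> 0 \<Longrightarrow> \<forall>t'. 0 \<le> t' \<longrightarrow> emeasure SSx (AS (l - 1) t') = ennreal (poi lam (l - 1) t')"
    and IHt: "r \<le> t \<Longrightarrow> emeasure SSx (AS l (t - r)) = ennreal (poi lam l (t - r))"
  shows "emeasure SSx (AS l t) = ennreal (poi lam l t)"
proof -
  interpret E: prob_space EEx by (rule EE_prob[OF lam r])
  interpret S: prob_space SSx by (rule E.prob_space_stream_space)
  define m where "m = min t r"
  have m: "0 \<le> m" "m \<le> t" using t r by (auto simp: m_def)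
  define h where "h a = (if a < m then (if l = 0 then 0 else ennreal (poi lam (l - 1) (t - a)))
     else ennreal (poi lam l (t - m)))" for a
  have sec: "emeasure SSx {s\<in>space SSx. a ## s \<in> AS l t} = h a" if a: "0 \<le> a" "a \<noteq> m" for a
  proof -
    consider "a < m" | "m < a" "t < r" | "m < a" "r \<le> t" using a by linarith
    then show ?thesis
    proof cases
      case 1
      then have at: "a < t" "a < r" by (auto simp: m_def)
      have "{s\<in>space SSx. a ## s \<in> AS l t} = (if l = 0 then {} else AS (l - 1) (t - a))"
        unfolding Aset_def[OF lam r] space_SS[OF lam r] using sec_small[OF a(1) r at] by auto
      then show ?thesis using 1 IHl at by (auto simp: h_def)
    next
      case 2
      then have mt: "m = t" by (auto simp: m_def)
      have "{s\<in>space SSx. a ## s \<in> AS l t} = (if l = 0 then {s\<in>space SSx. nonneg (sx s)} else {})"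
        unfolding Aset_def[OF lam r] space_SS[OF lam r] using sec_big1[OF a(1) r t 2(2)] 2 mt by auto
      then show ?thesis using 2 mt nonneg_one[OF lam r] by (auto simp: h_def poi_0)
    next
      case 3
      then have mt: "m = r" by (auto simp: m_def)
      have "{s\<in>space SSx. a ## s \<in> AS l t} = AS l (t - r)"
        unfolding Aset_def[OF lam r] space_SS[OF lam r] using sec_big2[OF a(1) r 3(2)] 3 mt by auto
      then show ?thesis using 3 mt IHt by (auto simp: h_def)
    qed
  qed
  have "emeasure SSx (AS l t) = (\<integral>\<^sup>+a. emeasure SSx {s\<in>space SSx. a ## s \<in> AS l t} \<partial>EEx)"
    by (rule E.emeasure_stream_space[OF Aset_sets[OF lam r]])
  also have "\<dots> = (\<integral>\<^sup>+a. h a \<partial>EEx)"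
  proof (rule nn_integral_cong_AE)
    have "AE a in lborel. a \<noteq> m" by (rule AE_lborel_singleton)
    then show "AE a in EEx. emeasure SSx {s\<in>space SSx. a ## s \<in> AS l t} = h a"
    proof (subst AE_density)
      show "(\<lambda>x. ennreal (exponential_density lam x)) \<in> borel_measurable lborel"
        unfolding exponential_density_def by measurable
      show "AE a in lborel. 0 < ennreal (exponential_density lam a) \<longrightarrow>
          emeasure SSx {s \<in> space SSx. a ## s \<in> AS l t} = h a"
        using \<open>AE a in lborel. a \<noteq> m\<close>
      proof eventually_elim
        case (elim a)
        show ?case
        proof
          assume "0 < ennreal (exponential_density lam a)"
          then have "0 \<le> a" by (auto simp: exponential_density_def split: if_splits)
          then show "emeasure SSx {s \<in> space SSx. a ## s \<in> AS l t} = h a" using sec elim by blast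
        qed
      qed
    qed
  qed
  also have "\<dots> = (\<integral>\<^sup>+a. ennreal (exponential_density lam a) * h a \<partial>lborel)"
  proof (rule nn_integral_density)
    show "(\<lambda>x. ennreal (exponential_density lam x)) \<in> borel_measurable lborel"
      unfolding exponential_density_def by measurable
    have "(\<lambda>a. if a < m then (if l = 0 then 0 else ennreal (poi lam (l - 1) (t - a)))
     else ennreal (poi lam l (t - m))) \<in> borel_measurable lborel"
      unfolding poi_def by measurable
    then show "h \<in> borel_measurable lborel" unfolding h_def[abs_def] .
  qed
  also have "\<dots> = ennreal (poi lam l (t - m)) * ennreal (exp (- lam * m)) + ennreal (Jint lam l t m)"
    by (rule integral_step[OF lam m]) (auto simp: h_def)
  also have "\<dots> = ennreal (poi lam l t)"
    using poi_identity[of lam l t m] m lam Jint_nonneg[OF m]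
    by (simp add: ennreal_mult[symmetric] ennreal_plus[symmetric] poi_nonneg del: ennreal_plus)
  finally show ?thesis .
qed

lemma Q_poi_aux:
  assumes IHl: "l \<noteq> 0 \<Longrightarrow> \<forall>t'. 0 \<le> t' \<longrightarrow> emeasure SSx (AS (l - 1) t') = ennreal (poi lam (l - 1) t')"
  shows "\<forall>t. 0 \<le> t \<and> t < real n * r \<longrightarrow> emeasure SSx (AS l t) = ennreal (poi lam l t)"
proof (induction n)
  case 0 then show ?case by auto
next
  case (Suc n)
  show ?case
  proof (intro allI impI)
    fix t assume t: "0 \<le> t \<and> t < real (Suc n) * r"
    show "emeasure SSx (AS l t) = ennreal (poi lam l t)"
    proof (rule step)
      show "0 \<le> t" using t by simp
      show "l \<noteq> 0 \<Longrightarrow> \<forall>t'. 0 \<le> t' \<longrightarrow> emeasure SSx (AS (l - 1) t') = ennreal (poi lam (l - 1) t')"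
        by (rule IHl)
      assume "r \<le> t"
      then show "emeasure SSx (AS l (t - r)) = ennreal (poi lam l (t - r))"
        using Suc.IH t by (auto simp: algebra_simps)
    qed
  qed
qed

lemma Q_poi: "0 \<le> t \<Longrightarrow> emeasure SSx (AS l t) = ennreal (poi lam l t)"
proof (induction l arbitrary: t)
  case 0
  obtain n where "t < real n * r" using ex_less_of_nat_mult[OF r] by blast
  then show ?case using Q_poi_aux[of 0 n] 0 by auto
next
  case (Suc l)
  obtain n where "t < real n * r" using ex_less_of_nat_mult[OF r] by blast
  moreover have "\<forall>t'. 0 \<le> t' \<longrightarrow> emeasure SSx (AS (Suc l - 1) t') = ennreal (poi lam (Suc l - 1) t')"
    using Suc.IH by simp
  ultimately show ?case using Q_poi_aux[of "Suc l" n] Suc.prems by auto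
qed

lemma poi_sums: "(\<lambda>l. poi lam l t) sums 1"
proof -
  have "(\<lambda>l. exp (- lam * t) * ((lam * t) ^ l /\<^sub>R fact l)) sums (exp (- lam * t) * exp (lam * t))"
    by (intro sums_mult exp_converges)
  moreover have "exp (- lam * t) * exp (lam * t) = 1" by (simp add: exp_minus field_simps)
  moreover have "(\<lambda>l. exp (- lam * t) * ((lam * t) ^ l /\<^sub>R fact l)) = (\<lambda>l. poi lam l t)"
    by (auto simp: poi_def divide_inverse_commute)
  ultimately show ?thesis by simp
qed

lemma good_one: "0 \<le> t \<Longrightarrow> emeasure SSx {s\<in>space SSx. good (sx s) r t} = 1"
proof -
  assume t: "0 \<le> t"
  have U: "{s\<in>space SSx. good (sx s) r t} = (\<Union>l. AS l t)" by (auto simp: Aset_def[OF lam r])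
  have disj: "disjoint_family (\<lambda>l. AS l t)" by (auto simp: disjoint_family_on_def Aset_def[OF lam r])
  have "(\<Sum>l. emeasure SSx (AS l t)) = emeasure SSx (\<Union>l. AS l t)"
    by (rule suminf_emeasure) (use Aset_sets[OF lam r] disj in auto)
  moreover have "(\<Sum>l. emeasure SSx (AS l t)) = (\<Sum>l. ennreal (poi lam l t))"
    using Q_poi[OF t] by simp
  moreover have "(\<Sum>l. ennreal (poi lam l t)) = ennreal 1"
    using poi_sums[of t] lam t by (subst suminf_ennreal2) (auto simp: poi_nonneg sums_iff)
  ultimately show ?thesis unfolding U by simp
qed

lemma D_poi: "0 \<le> t \<Longrightarrow> emeasure SSx {s\<in>space SSx. raft_D (sx s) r t = l} = ennreal (poi lam l t)"
proof -
  assume t: "0 \<le> t"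
  interpret E: prob_space EEx by (rule EE_prob[OF lam r])
  interpret S: prob_space SSx by (rule E.prob_space_stream_space)
  have [measurable]: "Measurable.pred SSx (\<lambda>s. raft_D (sx s) r t = l)"
    "Measurable.pred SSx (\<lambda>s. good (sx s) r t)"
    by (rule meas_raft[of sx], rule sx_meas[OF lam r])+
  let ?D = "{s\<in>space SSx. raft_D (sx s) r t = l}"
  let ?G = "{s\<in>space SSx. good (sx s) r t}"
  have B0: "emeasure SSx (space SSx - ?G) = 0"
  proof -
    have "?G \<in> sets SSx" by measurable
    then show ?thesis using emeasure_compl[of ?G SSx] good_one[OF t] by (simp add: S.emeasure_space_1)
  qed
  have "emeasure SSx ?D \<le> emeasure SSx (AS l t \<union> (space SSx - ?G))"
    by (rule emeasure_mono) (auto simp: Aset_def[OF lam r])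
  also have "\<dots> \<le> emeasure SSx (AS l t) + emeasure SSx (space SSx - ?G)"
    by (rule emeasure_subadditive) (auto simp: Aset_sets[OF lam r])
  finally have le: "emeasure SSx ?D \<le> emeasure SSx (AS l t)" using B0 by simp
  have ge: "emeasure SSx (AS l t) \<le> emeasure SSx ?D"
    by (rule emeasure_mono) (auto simp: Aset_def[OF lam r])
  show ?thesis using le ge Q_poi[OF t] by (simp add: antisym)
qed

end




theorem corollary1:
  fixes M :: "'a measure" and X :: "nat \<Rightarrow> 'a \<Rightarrow> real"
    and lam r t :: real and l :: nat
  assumes "prob_space M"
    and "prob_space.indep_vars M (\<lambda>_. borel) X {1..}"
    and "\<And>k. k \<ge> 1 \<Longrightarrow> distributed M lborel (X k) (exponential_density lam)"
    and "lam > 0" and "r > 0" and "t > 0"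
  shows "measure M {\<omega> \<in> space M. raft_D (\<lambda>k. X k \<omega>) r t = l}
           = exp (- lam * t) * (lam * t) ^ l / fact l"
proof -
  interpret M: prob_space M by fact
  note lam = \<open>lam > 0\<close> and r = \<open>r > 0\<close>
  define E where "E = density lborel (\<lambda>x. ennreal (exponential_density lam x))"
  have Eprob: "prob_space E" unfolding E_def by (rule EE_prob[OF lam r])
  have sets_E: "sets E = sets borel" by (simp add: E_def)
  have XmE: "X k \<in> measurable M E" if "k \<ge> 1" for k
  proof -
    have "X k \<in> measurable M lborel" using assms(3)[OF that] by (rule distributed_measurable)
    moreover have "measurable M lborel = measurable M E" by (rule measurable_cong_sets) (auto simp: sets_E)
    ultimately show ?thesis by simp
  qed
  have Xm: "X k \<in> measurable M borel" if "k \<in> {1..}" for k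
  proof -
    have "measurable M E = measurable M borel" by (rule measurable_cong_sets[OF refl sets_E])
    then show ?thesis using XmE[of k] that by simp
  qed
  have dX: "distr M borel (X k) = E" if "k \<in> {1..}" for k
  proof -
    have "distr M lborel (X k) = E"
      unfolding E_def using distributed_distr_eq_density[OF assms(3)] that by simp
    moreover have "distr M borel (X k) = distr M lborel (X k)" by (rule distr_cong) auto
    ultimately show ?thesis by simp
  qed
  define \<phi>1 where "\<phi>1 = (\<lambda>x. \<lambda>i\<in>{1::nat..}. X i x)"
  define \<phi>2 where "\<phi>2 = (\<lambda>(\<omega>::nat \<Rightarrow> real). \<lambda>n\<in>UNIV. \<omega> (Suc n))"
  define P where "P = (\<Pi>\<^sub>M i\<in>{1::nat..}. E)"
  define Q where "Q = (\<Pi>\<^sub>M i\<in>(UNIV::nat set). E)"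
  have "distr M (\<Pi>\<^sub>M i\<in>{1::nat..}. borel) \<phi>1 = (\<Pi>\<^sub>M i\<in>{1..}. distr M borel (X i))"
    unfolding \<phi>1_def
    by (rule M.indep_vars_iff_distr_eq_PiM'[THEN iffD1, OF _ Xm assms(2)]) auto
  also have "\<dots> = P" unfolding P_def by (rule PiM_cong) (auto simp: dX)
  finally have D1': "distr M (\<Pi>\<^sub>M i\<in>{1::nat..}. borel) \<phi>1 = P" .
  have D1: "distr M P \<phi>1 = P"
  proof -
    have "distr M P \<phi>1 = distr M (\<Pi>\<^sub>M i\<in>{1::nat..}. borel) \<phi>1"
      unfolding P_def by (rule distr_cong) (auto intro!: sets_PiM_cong simp: sets_E)
    then show ?thesis using D1' by simp
  qed
  have D2: "distr P Q \<phi>2 = Q"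
    unfolding P_def Q_def \<phi>2_def
    using distr_PiM_reindex[of "{1::nat..}" "\<lambda>_. E" Suc UNIV] Eprob by auto
  have D3: "distr Q (stream_space E) to_stream = stream_space E"
    unfolding Q_def by (rule stream_space_eq_distr[symmetric])
  have m1: "\<phi>1 \<in> measurable M P" unfolding \<phi>1_def P_def by (rule measurable_restrict) (auto intro: XmE)
  have m2: "\<phi>2 \<in> measurable P Q" unfolding \<phi>2_def P_def Q_def
    by (rule measurable_restrict) (auto intro!: measurable_component_singleton)
  have m3: "to_stream \<in> measurable Q (stream_space E)" unfolding Q_def by (rule measurable_to_stream)
  define g where "g = to_stream \<circ> (\<phi>2 \<circ> \<phi>1)"
  have gm: "g \<in> measurable M (stream_space E)" unfolding g_def
    using m1 m2 m3 by (auto intro!: measurable_comp)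
  have Dg: "distr M (stream_space E) g = stream_space E"
  proof -
    have "distr M (stream_space E) g = distr (distr (distr M P \<phi>1) Q \<phi>2) (stream_space E) to_stream"
      unfolding g_def using m1 m2 m3 by (simp add: distr_distr measurable_comp)
    also have "\<dots> = stream_space E" using D1 D2 D3 by simp
    finally show ?thesis .
  qed
  have gk: "sx (g \<omega>) k = X k \<omega>" if "k \<ge> 1" for \<omega> k
    using that by (simp add: g_def \<phi>1_def \<phi>2_def sx_def to_stream_def)
  define DS where "DS = {s\<in>space (stream_space E). raft_D (sx s) r t = l}"
  have DS_sets: "DS \<in> sets (stream_space E)"
  proof -
    have sm: "(\<lambda>s. sx s k) \<in> borel_measurable (stream_space E)" for k
      unfolding E_def by (rule sx_meas[OF lam r])
    have "Measurable.pred (stream_space E) (\<lambda>s. raft_D (sx s) r t = l)"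
      by (rule meas_raft[of sx, OF sm])
    then show ?thesis unfolding DS_def by measurable
  qed
  have eqset: "{\<omega> \<in> space M. raft_D (\<lambda>k. X k \<omega>) r t = l} = g -` DS \<inter> space M"
  proof -
    have "raft_D (\<lambda>k. X k \<omega>) r t = raft_D (sx (g \<omega>)) r t" for \<omega>
      by (rule raft_cong) (simp add: gk)
    then show ?thesis unfolding DS_def by (auto simp: space_stream_space E_def)
  qed
  have "measure M {\<omega> \<in> space M. raft_D (\<lambda>k. X k \<omega>) r t = l} = measure (stream_space E) DS"
    unfolding eqset using measure_distr[OF gm DS_sets] Dg by simp
  also have "\<dots> = poi lam l t"
    unfolding measure_def DS_def E_def using D_poi[OF lam r, of t l] \<open>t > 0\<close> lam
    by (simp add: poi_nonneg)
  finally show ?thesis by (simp add: poi_def)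
qed


end
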